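(* Let $p$ be a positive integer, $r\ge 2$ an integer, $s=p+2r$, and $M=(m_{ij})\in\mathfrak{so}(r,\mathbb{C})$. Let $S$ be the $(r-1)\times r$ matrix $S=\big(I_{r-1}\mid m\big)$, whose last column is $m=(m_{1r},\dots,m_{r-1,r})^t$. Define $\hat\Phi:U_{ps}(\mathbb{R})\to\mathbb{C}^{(r-1)\times p}$ by $\hat\Phi(X)=S(W+M\bar W)A^{-1}$, where for $X=(X_0;X_1;X_2;X_3)$ (blocks of $p,p,r,r$ rows) $A=X_0-X_1$ and $W=X_2+iX_3$. Then $\hat\Phi$ is independent of the last row of $X$, thus inducing a map $\Phi:U_{p,s-1}(\mathbb{R})\to\mathbb{C}^{(r-1)\times p}$, and the complex valued components of $\Phi$ constitute an orthogonal harmonic family of $\mathbf{GL}_p(\mathbb{R})$-invariant functions on $U_{p,s-1}(\mathbb{R})$, equipped with the semi-Euclidean metric.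
   Context: $\mathfrak{so}(r,\mathbb{C})$ is the set of complex skew-symmetric $r\times r$ matrices. For $n\ge1$, $U_{pn}(\mathbb{R})=\{X=\binom{X_0}{X'}\in\mathbb{R}^{(p+n)\times p}: -X_0^tX_0+X'^tX' \text{ negative definite}\}$ with $X_0$ the first $p$ rows; $U_{p,s-1}(\mathbb{R})$ is identified with the matrices obtained from elements of $U_{ps}(\mathbb{R})$ by deleting the last row. $\mathbf{GL}_p(\mathbb{R})$ acts by right multiplication. The semi-Euclidean metric is $(X,Y)=\mathrm{trace}(X^t\mathrm{diag}(-I_p,I_n)Y)$. For a semi-Riemannian manifold $(M,g)$ and complex functions $\phi,\psi$, $\tau(\phi)$ is the Laplace–Beltrami operator (extended complex-linearly) and $\kappa(\phi,\psi)=g(\mathrm{grad}\,\phi,\mathrm{grad}\,\psi)$ with $g$ extended complex-bilinearly. A set $\Omega$ of complex functions is an orthogonal harmonic family if $\tau(\phi)=0$ and $\kappa(\phi,\psi)=0$ for all $\phi,\psi\in\Omega$. *)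

theory Defs
  imports "HOL-Analysis.Analysis"
begin

text \<open>Real matrices are represented as functions nat => nat => real; a
(p+n) x p matrix is such a function vanishing outside the index range
{0..<p+n} x {0..<p}. Indices are 0-based.\<close>

type_synonym rmat = "nat \<Rightarrow> nat \<Rightarrow> real"
type_synonym cmat = "nat \<Rightarrow> nat \<Rightarrow> complex"

definition Upn :: "nat \<Rightarrow> nat \<Rightarrow> rmat set" where
  "Upn p n = {X. (\<forall>i j. (p + n \<le> i \<or> p \<le> j) \<longrightarrow> X i j = 0) \<and>
     (\<forall>v::nat \<Rightarrow> real. (\<exists>j<p. v j \<noteq> 0) \<longrightarrow>
        - (\<Sum>i<p. (\<Sum>j<p. X i j * v j)\<^sup>2) + (\<Sum>i\<in>{p..<p+n}. (\<Sum>j<p. X i j * v j)\<^sup>2) < 0)}"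

definition coord_shift :: "rmat \<Rightarrow> nat \<Rightarrow> nat \<Rightarrow> real \<Rightarrow> rmat" where
  "coord_shift X i j t = X(i := (X i)(j := X i j + t))"

definition pdiff :: "(rmat \<Rightarrow> complex) \<Rightarrow> nat \<Rightarrow> nat \<Rightarrow> rmat \<Rightarrow> complex" where
  "pdiff \<phi> i j X = vector_derivative (\<lambda>t. \<phi> (coord_shift X i j t)) (at 0)"

definition twice_pdiff :: "nat \<Rightarrow> nat \<Rightarrow> rmat set \<Rightarrow> (rmat \<Rightarrow> complex) \<Rightarrow> bool" where
  "twice_pdiff p n U \<phi> = (\<forall>X\<in>U. \<forall>i<p+n. \<forall>j<p.
      (\<lambda>t. \<phi> (coord_shift X i j t)) differentiable (at 0) \<and>
      (\<lambda>t. pdiff \<phi> i j (coord_shift X i j t)) differentiable (at 0))"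

definition msign :: "nat \<Rightarrow> nat \<Rightarrow> real" where
  "msign p i = (if i < p then -1 else 1)"

text \<open>Laplace-Beltrami operator tau and conformality operator kappa for the
semi-Euclidean metric (X,Y) = trace(X^t diag(-I_p,I_n) Y) on R^{(p+n) x p}.\<close>
definition tau :: "nat \<Rightarrow> nat \<Rightarrow> (rmat \<Rightarrow> complex) \<Rightarrow> rmat \<Rightarrow> complex" where
  "tau p n \<phi> X = (\<Sum>i<p+n. \<Sum>j<p. of_real (msign p i) * pdiff (pdiff \<phi> i j) i j X)"

definition kappa :: "nat \<Rightarrow> nat \<Rightarrow> (rmat \<Rightarrow> complex) \<Rightarrow> (rmat \<Rightarrow> complex) \<Rightarrow> rmat \<Rightarrow> complex" where
  "kappa p n \<phi> \<psi> X = (\<Sum>i<p+n. \<Sum>j<p. of_real (msign p i) * pdiff \<phi> i j X * pdiff \<psi> i j X)"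

definition orthogonal_harmonic_family ::
    "nat \<Rightarrow> nat \<Rightarrow> rmat set \<Rightarrow> (rmat \<Rightarrow> complex) set \<Rightarrow> bool" where
  "orthogonal_harmonic_family p n U \<Omega> =
     ((\<forall>\<phi>\<in>\<Omega>. \<forall>X\<in>U. tau p n \<phi> X = 0) \<and>
      (\<forall>\<phi>\<in>\<Omega>. \<forall>\<psi>\<in>\<Omega>. \<forall>X\<in>U. kappa p n \<phi> \<psi> X = 0))"

definition invertible_p :: "nat \<Rightarrow> rmat \<Rightarrow> bool" where
  "invertible_p p g = (\<exists>h. \<forall>i<p. \<forall>j<p.
      (\<Sum>k<p. g i k * h k j) = (if i = j then 1 else 0) \<and>
      (\<Sum>k<p. h i k * g k j) = (if i = j then 1 else 0))"

definition rmul :: "nat \<Rightarrow> rmat \<Rightarrow> rmat \<Rightarrow> rmat" where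
  "rmul p X g = (\<lambda>i j. if j < p then (\<Sum>k<p. X i k * g k j) else 0)"

definition GL_invariant :: "nat \<Rightarrow> rmat set \<Rightarrow> (rmat \<Rightarrow> complex) \<Rightarrow> bool" where
  "GL_invariant p U \<phi> = (\<forall>X\<in>U. \<forall>g. invertible_p p g \<longrightarrow> \<phi> (rmul p X g) = \<phi> X)"

definition inv_p :: "nat \<Rightarrow> rmat \<Rightarrow> rmat" where
  "inv_p p A = (SOME B. \<forall>i<p. \<forall>j<p.
      (\<Sum>k<p. A i k * B k j) = (if i = j then 1 else 0) \<and>
      (\<Sum>k<p. B i k * A k j) = (if i = j then 1 else 0))"

definition so_r :: "nat \<Rightarrow> cmat set" where
  "so_r r = {M. \<forall>i<r. \<forall>j<r. M j i = - M i j}"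

text \<open>The map Phi-hat(X) = S (W + M conj(W)) A^{-1}, with X = (X0;X1;X2;X3)
(row blocks of sizes p,p,r,r), A = X0 - X1, W = X2 + i X3, S = (I_{r-1} | m),
m the last column of M without its last entry.\<close>
definition Phi_hat :: "nat \<Rightarrow> nat \<Rightarrow> cmat \<Rightarrow> rmat \<Rightarrow> cmat" where
  "Phi_hat p r M X = (\<lambda>k j.
     if k < r - 1 \<and> j < p then
       (let A = (\<lambda>a b. X a b - X (p + a) b);
            Ai = inv_p p A;
            W = (\<lambda>l b. Complex (X (2*p + l) b) (X (2*p + r + l) b));
            B = (\<lambda>l b. W l b + (\<Sum>q<r. M l q * cnj (W q b)));
            C = (\<lambda>a b. B a b + M a (r - 1) * B (r - 1) b)
        in (\<Sum>q<p. C k q * of_real (Ai q j)))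
     else 0)"

end

theory Submission
  imports Defs "Jordan_Normal_Form.Determinant"
begin
lemma inv_exists:
  fixes A :: rmat
  assumes "\<forall>v::nat\<Rightarrow>real. (\<exists>j<p. v j \<noteq> 0) \<longrightarrow> (\<exists>i<p. (\<Sum>j<p. A i j * v j) \<noteq> 0)"
  shows "\<exists>B. \<forall>i<p. \<forall>j<p. (\<Sum>k<p. A i k * B k j) = (if i = j then 1 else 0) \<and>
      (\<Sum>k<p. B i k * A k j) = (if i = j then 1 else 0)"
proof -
  define Am where "Am = mat p p (\<lambda>(i,j). A i j)"
  have car: "Am \<in> carrier_mat p p" unfolding Am_def by simp
  have "det Am \<noteq> 0"
  proof
    assume "det Am = 0"
    then obtain v where v: "v \<in> carrier_vec p" "v \<noteq> 0\<^sub>v p" "Am *\<^sub>v v = 0\<^sub>v p"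
      using det_0_iff_vec_prod_zero[OF car] by blast
    define vf where "vf = (\<lambda>j. if j < p then v $ j else 0)"
    have "\<exists>j<p. vf j \<noteq> 0"
    proof (rule ccontr)
      assume "\<not> ?thesis"
      then have "v = 0\<^sub>v p" using v(1) unfolding vf_def by (auto intro!: eq_vecI)
      with v(2) show False by simp
    qed
    then obtain i where i: "i < p" "(\<Sum>j<p. A i j * vf j) \<noteq> 0" using assms by blast
    have "(Am *\<^sub>v v) $ i = (\<Sum>j<p. A i j * vf j)"
      using i(1) v(1) unfolding Am_def vf_def
      by (auto simp: mult_mat_vec_def scalar_prod_def row_def intro!: sum.cong)
    then show False using v(3) i by simp
  qed
  then have "Am \<in> Units (ring_mat TYPE(real) p ())" by (rule det_non_zero_imp_unit[OF car])
  then obtain Bm where Bm: "Bm \<in> carrier_mat p p" "Am * Bm = 1\<^sub>m p" "Bm * Am = 1\<^sub>m p"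
    unfolding Units_def by (auto simp: ring_mat_def)
  show ?thesis
  proof (intro exI[of _ "\<lambda>i j. Bm $$ (i,j)"] allI impI conjI)
    fix i j assume ij: "i < p" "j < p"
    have "(Am * Bm) $$ (i,j) = (\<Sum>k<p. A i k * Bm $$ (k,j))"
      using ij Bm(1) unfolding Am_def
      by (auto simp: scalar_prod_def row_def col_def intro!: sum.cong)
    then show "(\<Sum>k<p. A i k * Bm $$ (k,j)) = (if i = j then 1 else 0)" using Bm(2) ij by simp
    have "(Bm * Am) $$ (i,j) = (\<Sum>k<p. Bm $$ (i,k) * A k j)"
      using ij Bm(1) unfolding Am_def
      by (auto simp: scalar_prod_def row_def col_def intro!: sum.cong)
    then show "(\<Sum>k<p. Bm $$ (i,k) * A k j) = (if i = j then 1 else 0)" using Bm(3) ij by simp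
  qed
qed
definition isinv :: "nat \<Rightarrow> rmat \<Rightarrow> rmat \<Rightarrow> bool" where
  "isinv p A B = (\<forall>i<p. \<forall>j<p. (\<Sum>k<p. A i k * B k j) = (if i = j then 1 else 0) \<and>
      (\<Sum>k<p. B i k * A k j) = (if i = j then 1 else 0))"

lemma if0_mult: "(if Q then c else 0) * x = (if Q then c * x else (0::'a::mult_zero))" by simp
lemma mult_if0: "x * (if Q then c else 0) = (if Q then x * c else (0::'a::mult_zero))" by simp

lemma isinv_unique:
  assumes "isinv p A B" "isinv p A B'" "i < p" "j < p"
  shows "B i j = B' i j"
proof -
  have "B i j = (\<Sum>k<p. B i k * (if k = j then 1 else 0))"
    using assms(4) by (simp add: mult_if0)
  also have "\<dots> = (\<Sum>k<p. B i k * (\<Sum>l<p. A k l * B' l j))"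
    using assms(2,4) unfolding isinv_def by (intro sum.cong) auto
  also have "\<dots> = (\<Sum>l<p. (\<Sum>k<p. B i k * A k l) * B' l j)"
  proof -
    have "(\<Sum>k<p. B i k * (\<Sum>l<p. A k l * B' l j)) = (\<Sum>k<p. \<Sum>l<p. B i k * A k l * B' l j)"
      by (simp add: sum_distrib_left mult.assoc)
    also have "\<dots> = (\<Sum>l<p. \<Sum>k<p. B i k * A k l * B' l j)" by (rule sum.swap)
    also have "\<dots> = (\<Sum>l<p. (\<Sum>k<p. B i k * A k l) * B' l j)"
      by (simp add: sum_distrib_right)
    finally show ?thesis .
  qed
  also have "\<dots> = (\<Sum>l<p. (if i = l then 1 else 0) * B' l j)"
    using assms(1,3) unfolding isinv_def by (intro sum.cong) auto
  also have "\<dots> = B' i j" using assms(3) by (simp add: if0_mult)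
  finally show ?thesis .
qed

lemma inv_p_alt: "inv_p p A = (SOME B. isinv p A B)"
  unfolding inv_p_def isinv_def by simp

lemma inv_p_isinv: "isinv p A B \<Longrightarrow> isinv p A (inv_p p A)"
  unfolding inv_p_alt by (metis someI)

lemma inv_p_eq: "isinv p A B \<Longrightarrow> i < p \<Longrightarrow> j < p \<Longrightarrow> inv_p p A i j = B i j"
  by (rule isinv_unique[OF inv_p_isinv]) auto

lemma isinv_cong:
  assumes "isinv p A B" "\<And>i j. i < p \<Longrightarrow> j < p \<Longrightarrow> A i j = A' i j"
    "\<And>i j. i < p \<Longrightarrow> j < p \<Longrightarrow> B i j = B' i j"
  shows "isinv p A' B'"
proof -
  have s1: "(\<Sum>k<p. A' i k * B' k j) = (\<Sum>k<p. A i k * B k j)" if "i < p" "j < p" for i j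
    using that assms(2,3) by (intro sum.cong) auto
  have s2: "(\<Sum>k<p. B' i k * A' k j) = (\<Sum>k<p. B i k * A k j)" if "i < p" "j < p" for i j
    using that assms(2,3) by (intro sum.cong) auto
  show ?thesis using assms(1) unfolding isinv_def by (simp add: s1 s2)
qed

lemma inv_p_cong:
  assumes "\<And>i j. i < p \<Longrightarrow> j < p \<Longrightarrow> A i j = A' i j"
  shows "inv_p p A = inv_p p A'"
proof -
  have "isinv p A B = isinv p A' B" for B
    using isinv_cong[of p A B A' B] isinv_cong[of p A' B A B] assms by auto
  then have "isinv p A = isinv p A'" by (rule ext)
  then show ?thesis unfolding inv_p_alt by simp
qed

lemma sherman_morrison:
  assumes inv: "isinv p A Ai" and ab: "a < p" "b < p" and nz: "1 + t * Ai b a \<noteq> 0"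
  shows "isinv p (\<lambda>i j. A i j + (if i = a \<and> j = b then t else 0))
                 (\<lambda>q j. Ai q j - t / (1 + t * Ai b a) * Ai q a * Ai b j)"
proof -
  define \<rho> where "\<rho> = t / (1 + t * Ai b a)"
  have rho: "\<rho> * (1 + t * Ai b a) = t" unfolding \<rho>_def using nz by simp
  have I: "(\<Sum>k<p. A i k * Ai k j) = (if i = j then 1 else 0)"
     "(\<Sum>k<p. Ai i k * A k j) = (if i = j then 1 else 0)" if "i < p" "j < p" for i j
    using inv that unfolding isinv_def by auto
  have key: "x * (t - \<rho> * (1 + t * Ai b a)) = 0" for x using rho by simp
  show ?thesis unfolding isinv_def \<rho>_def[symmetric]
  proof (intro allI impI conjI)
    fix i j assume ij: "i < p" "j < p"
    have "(\<Sum>k<p. (A i k + (if i = a \<and> k = b then t else 0)) * (Ai k j - \<rho> * Ai k a * Ai b j))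
        = (\<Sum>k<p. A i k * Ai k j - (\<rho> * Ai b j) * (A i k * Ai k a)
            + (if i = a \<and> k = b then t else 0) * (Ai k j - \<rho> * Ai k a * Ai b j))"
      by (rule sum.cong) (simp_all add: algebra_simps)
    also have "\<dots> = (\<Sum>k<p. A i k * Ai k j) - (\<rho> * Ai b j) * (\<Sum>k<p. A i k * Ai k a)
        + (\<Sum>k<p. (if i = a \<and> k = b then t else 0) * (Ai k j - \<rho> * Ai k a * Ai b j))"
      by (simp only: sum.distrib sum_subtractf sum_distrib_left)
    also have "(\<Sum>k<p. (if i = a \<and> k = b then t else 0) * (Ai k j - \<rho> * Ai k a * Ai b j))
       = (if i = a then t * (Ai b j - \<rho> * Ai b a * Ai b j) else 0)"
      using ab by (cases "i = a") (simp_all add: if0_mult mult_if0)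
    also have "(\<Sum>k<p. A i k * Ai k j) - (\<rho> * Ai b j) * (\<Sum>k<p. A i k * Ai k a)
       = (if i = j then 1 else 0) - (\<rho> * Ai b j) * (if i = a then 1 else 0)"
      using I ij ab by simp
    also have "(if i = j then 1 else 0) - (\<rho> * Ai b j) * (if i = a then 1 else 0)
         + (if i = a then t * (Ai b j - \<rho> * Ai b a * Ai b j) else 0)
       = (if i = j then 1 else 0) + (if i = a then Ai b j * (t - \<rho> * (1 + t * Ai b a)) else 0)"
      by (simp add: algebra_simps)
    finally show "(\<Sum>k<p. (A i k + (if i = a \<and> k = b then t else 0)) * (Ai k j - \<rho> * Ai k a * Ai b j))
       = (if i = j then 1 else 0)"
      using key by simp
  next
    fix i j assume ij: "i < p" "j < p"
    have "(\<Sum>k<p. (Ai i k - \<rho> * Ai i a * Ai b k) * (A k j + (if k = a \<and> j = b then t else 0)))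
        = (\<Sum>k<p. Ai i k * A k j - (\<rho> * Ai i a) * (Ai b k * A k j)
            + (Ai i k - \<rho> * Ai i a * Ai b k) * (if k = a \<and> j = b then t else 0))"
      by (rule sum.cong) (simp_all add: algebra_simps)
    also have "\<dots> = (\<Sum>k<p. Ai i k * A k j) - (\<rho> * Ai i a) * (\<Sum>k<p. Ai b k * A k j)
        + (\<Sum>k<p. (Ai i k - \<rho> * Ai i a * Ai b k) * (if k = a \<and> j = b then t else 0))"
      by (simp only: sum.distrib sum_subtractf sum_distrib_left)
    also have "(\<Sum>k<p. (Ai i k - \<rho> * Ai i a * Ai b k) * (if k = a \<and> j = b then t else 0))
       = (if j = b then (Ai i a - \<rho> * Ai i a * Ai b a) * t else 0)"
      using ab by (cases "j = b") (simp_all add: if0_mult mult_if0)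
    also have "(\<Sum>k<p. Ai i k * A k j) - (\<rho> * Ai i a) * (\<Sum>k<p. Ai b k * A k j)
       = (if i = j then 1 else 0) - (\<rho> * Ai i a) * (if b = j then 1 else 0)"
      using I ij ab by simp
    also have "(if i = j then 1 else 0) - (\<rho> * Ai i a) * (if b = j then 1 else 0)
         + (if j = b then (Ai i a - \<rho> * Ai i a * Ai b a) * t else 0)
       = (if i = j then 1 else 0) + (if j = b then Ai i a * (t - \<rho> * (1 + t * Ai b a)) else 0)"
      by (simp add: algebra_simps)
    finally show "(\<Sum>k<p. (Ai i k - \<rho> * Ai i a * Ai b k) * (A k j + (if k = a \<and> j = b then t else 0)))
       = (if i = j then 1 else 0)"
      using key by simp
  qed
qed

definition Af :: "nat \<Rightarrow> rmat \<Rightarrow> rmat" where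
  "Af p X = (\<lambda>a b. X a b - X (p + a) b)"
definition Wf :: "nat \<Rightarrow> nat \<Rightarrow> rmat \<Rightarrow> cmat" where
  "Wf p r X = (\<lambda>l b. Complex (X (2*p + l) b) (X (2*p + r + l) b))"
definition Bf :: "nat \<Rightarrow> nat \<Rightarrow> cmat \<Rightarrow> rmat \<Rightarrow> cmat" where
  "Bf p r M X = (\<lambda>l b. Wf p r X l b + (\<Sum>q<r. M l q * cnj (Wf p r X q b)))"
definition Cf :: "nat \<Rightarrow> nat \<Rightarrow> cmat \<Rightarrow> rmat \<Rightarrow> cmat" where
  "Cf p r M X = (\<lambda>a b. Bf p r M X a b + M a (r - 1) * Bf p r M X (r - 1) b)"

lemma Phi_hat_alt: "Phi_hat p r M X k j = (if k < r - 1 \<and> j < p then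
   (\<Sum>q<p. Cf p r M X k q * of_real (inv_p p (Af p X) q j)) else 0)"
  unfolding Phi_hat_def Af_def Wf_def Bf_def Cf_def Let_def by simp

lemma Upn_inv:
  assumes X: "X \<in> Upn p n" and pn: "p \<le> n"
  shows "\<exists>B. isinv p (Af p X) B"
proof -
  have "\<exists>i<p. (\<Sum>j<p. Af p X i j * v j) \<noteq> 0" if v: "\<exists>j<p. v j \<noteq> 0" for v :: "nat \<Rightarrow> real"
  proof (rule ccontr)
    assume "\<not> ?thesis"
    then have z: "(\<Sum>j<p. X i j * v j) = (\<Sum>j<p. X (p + i) j * v j)" if "i < p" for i
      using that by (auto simp: Af_def algebra_simps sum_subtractf)
    have neg: "- (\<Sum>i<p. (\<Sum>j<p. X i j * v j)\<^sup>2) + (\<Sum>i\<in>{p..<p+n}. (\<Sum>j<p. X i j * v j)\<^sup>2) < 0"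
      using X v unfolding Upn_def by blast
    have "(\<Sum>i<p. (\<Sum>j<p. X i j * v j)\<^sup>2) = (\<Sum>i<p. (\<Sum>j<p. X (p + i) j * v j)\<^sup>2)"
      using z by simp
    also have "\<dots> = (\<Sum>i\<in>(\<lambda>i. p + i) ` {..<p}. (\<Sum>j<p. X i j * v j)\<^sup>2)"
      by (simp add: sum.reindex)
    also have "\<dots> \<le> (\<Sum>i\<in>{p..<p+n}. (\<Sum>j<p. X i j * v j)\<^sup>2)"
      using pn by (intro sum_mono2) auto
    finally show False using neg by simp
  qed
  then show ?thesis using inv_exists[of p "Af p X"] unfolding isinv_def by blast
qed

definition Ef :: "nat \<Rightarrow> nat \<Rightarrow> nat \<Rightarrow> nat \<Rightarrow> complex" where
  "Ef p r i l = (if i = 2*p + l then 1 else 0) + (if i = 2*p + r + l then \<i> else 0)"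
definition EBf :: "nat \<Rightarrow> nat \<Rightarrow> cmat \<Rightarrow> nat \<Rightarrow> nat \<Rightarrow> complex" where
  "EBf p r M i l = Ef p r i l + (\<Sum>q<r. M l q * cnj (Ef p r i q))"
definition Fc :: "nat \<Rightarrow> nat \<Rightarrow> cmat \<Rightarrow> nat \<Rightarrow> nat \<Rightarrow> complex" where
  "Fc p r M i a = EBf p r M i a + M a (r - 1) * EBf p r M i (r - 1)"

lemma Wf_shift:
  "Wf p r (coord_shift X i b t) l q = Wf p r X l q + (if q = b then of_real t * Ef p r i l else 0)"
  by (auto simp: coord_shift_def Wf_def Ef_def complex_eq_iff)

lemma Bf_shift:
  "Bf p r M (coord_shift X i b t) l q = Bf p r M X l q + (if q = b then of_real t * EBf p r M i l else 0)"
proof (cases "q = b")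
  case True
  have "(\<Sum>q'<r. M l q' * cnj (Wf p r X q' q + of_real t * Ef p r i q'))
     = (\<Sum>q'<r. M l q' * cnj (Wf p r X q' q)) + of_real t * (\<Sum>q'<r. M l q' * cnj (Ef p r i q'))"
    by (simp add: sum.distrib sum_distrib_left algebra_simps)
  then show ?thesis using True by (simp add: Bf_def EBf_def Wf_shift algebra_simps)
next
  case False
  then show ?thesis by (simp add: Bf_def Wf_shift)
qed

lemma Cf_shift:
  "Cf p r M (coord_shift X i b t) a q = Cf p r M X a q + (if q = b then of_real t * Fc p r M i a else 0)"
  by (simp add: Cf_def Fc_def Bf_shift algebra_simps)

lemma Af_shift_high:
  "2 * p \<le> i \<Longrightarrow> u < p \<Longrightarrow> Af p (coord_shift X i b t) u v = Af p X u v"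
  by (auto simp: coord_shift_def Af_def)

lemma Phi_shift_high:
  assumes "2 * p \<le> i" "b < p" "k < r - 1" "j < p"
  shows "Phi_hat p r M (coord_shift X i b t) k j
     = Phi_hat p r M X k j + of_real t * (Fc p r M i k * of_real (inv_p p (Af p X) b j))"
proof -
  have inv: "inv_p p (Af p (coord_shift X i b t)) = inv_p p (Af p X)"
    by (rule inv_p_cong) (simp add: Af_shift_high assms)
  have "(\<Sum>q<p. Cf p r M (coord_shift X i b t) k q * of_real (inv_p p (Af p X) q j))
     = (\<Sum>q<p. Cf p r M X k q * of_real (inv_p p (Af p X) q j)
          + (if q = b then of_real t * Fc p r M i k * of_real (inv_p p (Af p X) q j) else 0))"
    by (rule sum.cong) (simp_all add: Cf_shift algebra_simps)
  also have "\<dots> = (\<Sum>q<p. Cf p r M X k q * of_real (inv_p p (Af p X) q j))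
          + of_real t * Fc p r M i k * of_real (inv_p p (Af p X) b j)"
    using assms(2) by (simp add: sum.distrib)
  finally show ?thesis using assms by (simp add: Phi_hat_alt inv algebra_simps)
qed

lemma Wf_shift_low: "i < 2 * p \<Longrightarrow> Wf p r (coord_shift X i b t) = Wf p r X"
  by (auto simp: coord_shift_def Wf_def fun_eq_iff)

lemma Cf_shift_low: "i < 2 * p \<Longrightarrow> Cf p r M (coord_shift X i b t) = Cf p r M X"
  by (simp add: Cf_def Bf_def Wf_shift_low)

lemma Phi_line_A:
  assumes inv: "isinv p (Af p X) Ai" and ab: "a < p" "b < p" and kj: "k < r - 1" "j < p"
    and AY: "\<And>u v. u < p \<Longrightarrow> v < p \<Longrightarrow> Af p Y u v = Af p X u v + (if u = a \<and> v = b then s else 0)"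
    and CY: "Cf p r M Y = Cf p r M X" and nz: "1 + s * Ai b a \<noteq> 0"
  shows "Phi_hat p r M Y k j = Phi_hat p r M X k j
     - of_real (s / (1 + s * Ai b a)) * ((\<Sum>q<p. Cf p r M X k q * of_real (Ai q a)) * of_real (Ai b j))"
proof -
  have sm: "isinv p (\<lambda>i j. Af p X i j + (if i = a \<and> j = b then s else 0))
                 (\<lambda>q j. Ai q j - s / (1 + s * Ai b a) * Ai q a * Ai b j)"
    by (rule sherman_morrison[OF inv ab nz])
  have iY: "inv_p p (Af p Y) q j = Ai q j - s / (1 + s * Ai b a) * Ai q a * Ai b j" if "q < p" for q
  proof -
    have "inv_p p (Af p Y) = inv_p p (\<lambda>i j. Af p X i j + (if i = a \<and> j = b then s else 0))"
      by (rule inv_p_cong) (simp add: AY)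
    then show ?thesis using inv_p_eq[OF sm that kj(2)] by simp
  qed
  have iX: "inv_p p (Af p X) q j = Ai q j" if "q < p" for q using inv_p_eq[OF inv that kj(2)] .
  define \<rho> where "\<rho> = s / (1 + s * Ai b a)"
  have "(\<Sum>q<p. Cf p r M Y k q * of_real (inv_p p (Af p Y) q j))
      = (\<Sum>q<p. Cf p r M X k q * of_real (Ai q j) - of_real \<rho> * (Cf p r M X k q * of_real (Ai q a)) * of_real (Ai b j))"
    by (rule sum.cong) (simp_all add: iY CY \<rho>_def algebra_simps)
  also have "\<dots> = (\<Sum>q<p. Cf p r M X k q * of_real (Ai q j)) - of_real \<rho> * (\<Sum>q<p. Cf p r M X k q * of_real (Ai q a)) * of_real (Ai b j)"
    by (simp add: sum_subtractf sum_distrib_left sum_distrib_right)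
  finally show ?thesis using kj by (simp add: Phi_hat_alt iX \<rho>_def algebra_simps)
qed

lemma coord_shift_add: "coord_shift (coord_shift X i b t) i b u = coord_shift X i b (t + u)"
  by (auto simp: coord_shift_def fun_eq_iff)

lemma pdiff_line:
  fixes \<phi> :: "rmat \<Rightarrow> complex"
  assumes e: "e > 0"
    and feq: "\<And>t. t \<in> ball 0 e \<Longrightarrow> \<phi> (coord_shift X i b t) = f t"
    and g: "\<And>t. t \<in> ball 0 e \<Longrightarrow> (f has_vector_derivative g' t) (at t)"
    and g2: "(g' has_vector_derivative d) (at 0)"
  shows "pdiff \<phi> i b X = g' 0" "pdiff (pdiff \<phi> i b) i b X = d"
        "(\<lambda>t. \<phi> (coord_shift X i b t)) differentiable (at 0)"
        "(\<lambda>t. pdiff \<phi> i b (coord_shift X i b t)) differentiable (at 0)"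
proof -
  have g': "((\<lambda>t. \<phi> (coord_shift X i b t)) has_vector_derivative g' t) (at t)" if "t \<in> ball 0 e" for t
    by (rule has_vector_derivative_transform_within_open[OF g[OF that] open_ball that])
       (simp add: feq)
  have key: "pdiff \<phi> i b (coord_shift X i b t) = g' t" if "t \<in> ball 0 e" for t
  proof -
    have d1: "((\<lambda>u. t + u) has_vector_derivative 1) (at 0)"
      by (auto intro!: derivative_eq_intros)
    have "((\<lambda>t. \<phi> (coord_shift X i b t)) \<circ> (\<lambda>u. t + u) has_vector_derivative (1 *\<^sub>R g' t)) (at 0)"
      by (rule vector_diff_chain_at[OF d1]) (simp add: g'[OF that])
    then have "((\<lambda>u. \<phi> (coord_shift X i b (t + u))) has_vector_derivative g' t) (at 0)"
      by (simp add: o_def)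
    then show ?thesis unfolding pdiff_def coord_shift_add by (rule vector_derivative_at)
  qed
  have c0: "(0::real) \<in> ball 0 e" using e by simp
  show "pdiff \<phi> i b X = g' 0" using key[OF c0] by (simp add: coord_shift_def)
  have d0: "((\<lambda>t. pdiff \<phi> i b (coord_shift X i b t)) has_vector_derivative d) (at 0)"
    by (rule has_vector_derivative_transform_within_open[OF g2 open_ball c0]) (simp add: key)
  then show "pdiff (pdiff \<phi> i b) i b X = d" unfolding pdiff_def[of "pdiff \<phi> i b"]
    by (rule vector_derivative_at)
  show "(\<lambda>t. pdiff \<phi> i b (coord_shift X i b t)) differentiable (at 0)"
    using d0 by (auto simp: differentiable_def has_vector_derivative_def)
  show "(\<lambda>t. \<phi> (coord_shift X i b t)) differentiable (at 0)"
    using g'[OF c0] by (auto simp: differentiable_def has_vector_derivative_def)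
qed

lemma rat_line:
  fixes \<beta> \<sigma> :: real and \<alpha> \<gamma> :: complex
  assumes \<sigma>: "\<sigma> * \<sigma> = 1" and t: "t \<in> ball 0 (1 / (\<bar>\<beta>\<bar> + 1))"
  shows "1 + (\<sigma> * t) * \<beta> \<noteq> 0"
    and "((\<lambda>t. \<alpha> + \<gamma> * of_real ((\<sigma> * t) / (1 + (\<sigma> * t) * \<beta>))) has_vector_derivative
            (\<gamma> * of_real (\<sigma> / (1 + (\<sigma> * t) * \<beta>)^2))) (at t)"
proof -
  have "\<bar>t\<bar> < 1 / (\<bar>\<beta>\<bar> + 1)" using t by (simp add: dist_norm)
  then have "\<bar>t\<bar> * (\<bar>\<beta>\<bar> + 1) < 1"
    by (simp add: less_divide_eq)
  then have "\<bar>t\<bar> * \<bar>\<beta>\<bar> < 1" by (simp add: distrib_left)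
  then have tb: "\<bar>t * \<beta>\<bar> < 1" by (simp add: abs_mult)
  have sq: "((\<sigma> * t) * \<beta>) * ((\<sigma> * t) * \<beta>) = (\<sigma> * \<sigma>) * ((t * \<beta>) * (t * \<beta>))"
    by (simp only: ac_simps)
  show nz: "1 + (\<sigma> * t) * \<beta> \<noteq> 0"
  proof
    assume "1 + (\<sigma> * t) * \<beta> = 0"
    then have "(\<sigma> * t) * \<beta> = -1" by linarith
    then have "(t * \<beta>) * (t * \<beta>) = 1" using sq \<sigma> by simp
    then have "\<bar>t * \<beta>\<bar> * \<bar>t * \<beta>\<bar> = 1" by (simp add: abs_mult_self_eq)
    moreover have "\<bar>t * \<beta>\<bar> * \<bar>t * \<beta>\<bar> < 1"
      using tb by (metis abs_ge_zero mult_le_one less_le_not_le mult_strict_mono' less_imp_le mult_1_right)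
    ultimately show False by simp
  qed
  have d: "((\<lambda>t. (\<sigma> * t) / (1 + (\<sigma> * t) * \<beta>)) has_real_derivative
      ((\<sigma> * (1 + (\<sigma> * t) * \<beta>) - (\<sigma> * t) * (\<sigma> * \<beta>)) / ((1 + (\<sigma> * t) * \<beta>) * (1 + (\<sigma> * t) * \<beta>)))) (at t)"
  proof -
    have f1: "((\<lambda>t. \<sigma> * t) has_real_derivative \<sigma>) (at t)" by (auto intro!: derivative_eq_intros)
    have f2: "((\<lambda>t. 1 + (\<sigma> * t) * \<beta>) has_real_derivative \<sigma> * \<beta>) (at t)"
      by (auto intro!: derivative_eq_intros)
    show ?thesis by (rule DERIV_divide[OF f1 f2 nz])
  qed
  have "\<sigma> * (1 + (\<sigma> * t) * \<beta>) - (\<sigma> * t) * (\<sigma> * \<beta>) = \<sigma>" by (simp add: algebra_simps)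
  then have "((\<lambda>t. (\<sigma> * t) / (1 + (\<sigma> * t) * \<beta>)) has_real_derivative (\<sigma> / (1 + (\<sigma> * t) * \<beta>)^2)) (at t)"
    using d by (simp add: power2_eq_square)
  then show "((\<lambda>t. \<alpha> + \<gamma> * of_real ((\<sigma> * t) / (1 + (\<sigma> * t) * \<beta>))) has_vector_derivative
            (\<gamma> * of_real (\<sigma> / (1 + (\<sigma> * t) * \<beta>)^2))) (at t)"
    by (intro has_vector_derivative_add[of "\<lambda>t. \<alpha>" 0, simplified] has_vector_derivative_mult_right
         has_vector_derivative_of_real)
qed

lemma rat_line2:
  fixes \<beta> \<sigma> :: real and \<gamma> :: complex
  assumes \<sigma>: "\<sigma> = 1 \<or> \<sigma> = -1"
  shows "((\<lambda>t. \<gamma> * of_real (\<sigma> / (1 + (\<sigma> * t) * \<beta>)^2)) has_vector_derivative (\<gamma> * of_real (-2 * \<beta>))) (at 0)"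
proof -
  have f2: "((\<lambda>t. 1 + (\<sigma> * t) * \<beta>) has_real_derivative \<sigma> * \<beta>) (at 0)"
    by (auto intro!: derivative_eq_intros)
  have d: "((\<lambda>t. \<sigma> / (1 + (\<sigma> * t) * \<beta>)^2) has_real_derivative
     (0 * (1 + (\<sigma> * 0) * \<beta>)^2 - \<sigma> * (of_nat 2 * ((\<sigma> * \<beta>) * (1 + (\<sigma> * 0) * \<beta>)^(2 - Suc 0))))
       / ((1 + (\<sigma> * 0) * \<beta>)^2 * (1 + (\<sigma> * 0) * \<beta>)^2)) (at 0)"
    by (rule DERIV_divide[OF DERIV_const DERIV_power[OF f2]]) simp
  have "(0 * (1 + (\<sigma> * 0) * \<beta>)^2 - \<sigma> * (of_nat 2 * ((\<sigma> * \<beta>) * (1 + (\<sigma> * 0) * \<beta>)^(2 - Suc 0))))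
       / ((1 + (\<sigma> * 0) * \<beta>)^2 * (1 + (\<sigma> * 0) * \<beta>)^2) = -2 * \<beta>" (is "?v = _")
    using \<sigma> by auto
  then have "((\<lambda>t. \<sigma> / (1 + (\<sigma> * t) * \<beta>)^2) has_real_derivative (-2 * \<beta>)) (at 0)"
    using d by (simp only: \<open>?v = -2 * \<beta>\<close>)
  then show ?thesis by (intro has_vector_derivative_mult_right has_vector_derivative_of_real)
qed

lemma coord_A:
  assumes inv: "isinv p (Af p X) Ai" and ab: "a < p" "b < p" and kj: "k < r - 1" "j < p"
    and i2: "i < 2 * p"
    and AY: "\<And>t u v. u < p \<Longrightarrow> v < p \<Longrightarrow>
        Af p (coord_shift X i b t) u v = Af p X u v + (if u = a \<and> v = b then \<sigma> * t else 0)"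
    and \<sigma>: "\<sigma> = 1 \<or> \<sigma> = -1"
  shows "pdiff (\<lambda>Y. Phi_hat p r M Y k j) i b X
           = - ((\<Sum>q<p. Cf p r M X k q * of_real (Ai q a)) * of_real (Ai b j)) * of_real \<sigma>"
    "pdiff (pdiff (\<lambda>Y. Phi_hat p r M Y k j) i b) i b X
           = - ((\<Sum>q<p. Cf p r M X k q * of_real (Ai q a)) * of_real (Ai b j)) * of_real (-2 * Ai b a)"
    "(\<lambda>t. Phi_hat p r M (coord_shift X i b t) k j) differentiable (at 0)"
    "(\<lambda>t. pdiff (\<lambda>Y. Phi_hat p r M Y k j) i b (coord_shift X i b t)) differentiable (at 0)"
proof -
  define \<gamma> where "\<gamma> = - ((\<Sum>q<p. Cf p r M X k q * of_real (Ai q a)) * of_real (Ai b j))"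
  define \<beta> where "\<beta> = Ai b a"
  define e where "e = 1 / (\<bar>\<beta>\<bar> + 1)"
  define \<alpha> where "\<alpha> = Phi_hat p r M X k j"
  have ss: "\<sigma> * \<sigma> = 1" using \<sigma> by auto
  have e: "e > 0" unfolding e_def by (simp add: add_pos_nonneg)
  have feq: "Phi_hat p r M (coord_shift X i b t) k j = \<alpha> + \<gamma> * of_real ((\<sigma> * t) / (1 + (\<sigma> * t) * \<beta>))"
    if t: "t \<in> ball 0 e" for t
  proof -
    have nz: "1 + (\<sigma> * t) * Ai b a \<noteq> 0" using rat_line(1)[OF ss t[unfolded e_def]] \<beta>_def by simp
    have "Phi_hat p r M (coord_shift X i b t) k j = Phi_hat p r M X k j
     - of_real ((\<sigma> * t) / (1 + (\<sigma> * t) * Ai b a)) * ((\<Sum>q<p. Cf p r M X k q * of_real (Ai q a)) * of_real (Ai b j))"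
      by (rule Phi_line_A[OF inv ab kj AY Cf_shift_low[OF i2] nz])
    then show ?thesis by (simp add: \<alpha>_def \<gamma>_def \<beta>_def)
  qed
  have der: "((\<lambda>t. \<alpha> + \<gamma> * of_real ((\<sigma> * t) / (1 + (\<sigma> * t) * \<beta>))) has_vector_derivative
            (\<gamma> * of_real (\<sigma> / (1 + (\<sigma> * t) * \<beta>)^2))) (at t)" if t: "t \<in> ball 0 e" for t
    by (rule rat_line(2)[OF ss t[unfolded e_def]])
  note L = pdiff_line[OF e feq der rat_line2[OF \<sigma>]]
  show "pdiff (\<lambda>Y. Phi_hat p r M Y k j) i b X
           = - ((\<Sum>q<p. Cf p r M X k q * of_real (Ai q a)) * of_real (Ai b j)) * of_real \<sigma>"
    using L(1) by (simp add: \<gamma>_def)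
  show "pdiff (pdiff (\<lambda>Y. Phi_hat p r M Y k j) i b) i b X
           = - ((\<Sum>q<p. Cf p r M X k q * of_real (Ai q a)) * of_real (Ai b j)) * of_real (-2 * Ai b a)"
    using L(2) by (simp add: \<gamma>_def \<beta>_def)
  show "(\<lambda>t. Phi_hat p r M (coord_shift X i b t) k j) differentiable (at 0)" using L(3) .
  show "(\<lambda>t. pdiff (\<lambda>Y. Phi_hat p r M Y k j) i b (coord_shift X i b t)) differentiable (at 0)"
    using L(4) .
qed

lemma AY_X0: "a < p \<Longrightarrow> u < p \<Longrightarrow> Af p (coord_shift X a b t) u v = Af p X u v + (if u = a \<and> v = b then 1 * t else 0)"
  by (auto simp: Af_def coord_shift_def)

lemma AY_X1: "u < p \<Longrightarrow> Af p (coord_shift X (p + a) b t) u v = Af p X u v + (if u = a \<and> v = b then (-1) * t else 0)"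
  by (auto simp: Af_def coord_shift_def)

lemma coord_high:
  assumes i: "2 * p \<le> i" and b: "b < p" and kj: "k < r - 1" "j < p"
  shows "pdiff (\<lambda>Y. Phi_hat p r M Y k j) i b X = Fc p r M i k * of_real (inv_p p (Af p X) b j)"
    "pdiff (pdiff (\<lambda>Y. Phi_hat p r M Y k j) i b) i b X = 0"
    "(\<lambda>t. Phi_hat p r M (coord_shift X i b t) k j) differentiable (at 0)"
    "(\<lambda>t. pdiff (\<lambda>Y. Phi_hat p r M Y k j) i b (coord_shift X i b t)) differentiable (at 0)"
proof -
  define c where "c = Fc p r M i k * of_real (inv_p p (Af p X) b j)"
  have feq: "Phi_hat p r M (coord_shift X i b t) k j = Phi_hat p r M X k j + of_real t * c"
    if "t \<in> ball 0 1" for t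
    unfolding c_def by (rule Phi_shift_high[OF i b kj])
  have der: "((\<lambda>t. Phi_hat p r M X k j + of_real t * c) has_vector_derivative (\<lambda>t. c) t) (at t)"
    if "t \<in> ball 0 1" for t
    by (auto intro!: derivative_eq_intros)
  have der2: "((\<lambda>t::real. c) has_vector_derivative 0) (at 0)" by simp
  have L0: "pdiff (\<lambda>Y. Phi_hat p r M Y k j) i b X = c"
    "pdiff (pdiff (\<lambda>Y. Phi_hat p r M Y k j) i b) i b X = 0"
    "(\<lambda>t. Phi_hat p r M (coord_shift X i b t) k j) differentiable (at 0)"
    "(\<lambda>t. pdiff (\<lambda>Y. Phi_hat p r M Y k j) i b (coord_shift X i b t)) differentiable (at 0)"
    using pdiff_line[of 1 "\<lambda>Y. Phi_hat p r M Y k j" X i b "\<lambda>t. Phi_hat p r M X k j + of_real t * c" "\<lambda>t. c" 0]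
      feq der der2 by auto
  note L = L0
  show "pdiff (\<lambda>Y. Phi_hat p r M Y k j) i b X = Fc p r M i k * of_real (inv_p p (Af p X) b j)"
    using L(1) by (simp add: c_def)
  show "pdiff (pdiff (\<lambda>Y. Phi_hat p r M Y k j) i b) i b X = 0" using L(2) .
  show "(\<lambda>t. Phi_hat p r M (coord_shift X i b t) k j) differentiable (at 0)" using L(3) .
  show "(\<lambda>t. pdiff (\<lambda>Y. Phi_hat p r M Y k j) i b (coord_shift X i b t)) differentiable (at 0)"
    using L(4) .
qed

definition Pm :: "nat \<Rightarrow> cmat \<Rightarrow> nat \<Rightarrow> nat \<Rightarrow> complex" where
  "Pm r M a l = (if l = a then 1 else 0) + M a (r - 1) * (if l = r - 1 then 1 else 0)"
definition Qm :: "nat \<Rightarrow> cmat \<Rightarrow> nat \<Rightarrow> nat \<Rightarrow> complex" where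
  "Qm r M a l = M a l + M a (r - 1) * M (r - 1) l"

lemma Ef_re: "l < r \<Longrightarrow> Ef p r (2*p + l) q = (if q = l then 1 else 0)"
  by (auto simp: Ef_def)

lemma Ef_im: "l < r \<Longrightarrow> q < r \<Longrightarrow> Ef p r (2*p + r + l) q = (if q = l then \<i> else 0)"
  by (auto simp: Ef_def)

lemma EB_re: "l < r \<Longrightarrow> EBf p r M (2*p + l) m = (if m = l then 1 else 0) + M m l"
proof -
  assume l: "l < r"
  have "(\<Sum>q<r. M m q * cnj (Ef p r (2*p + l) q)) = (\<Sum>q<r. if q = l then M m q else 0)"
    using l by (intro sum.cong) (auto simp: Ef_re)
  also have "\<dots> = M m l" using l by simp
  finally show ?thesis using l by (simp add: EBf_def Ef_re)
qed

lemma EB_im: "l < r \<Longrightarrow> m < r \<Longrightarrow> EBf p r M (2*p + r + l) m = \<i> * ((if m = l then 1 else 0) - M m l)"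
proof -
  assume l: "l < r" and m: "m < r"
  have "(\<Sum>q<r. M m q * cnj (Ef p r (2*p + r + l) q)) = (\<Sum>q<r. if q = l then - \<i> * M m q else 0)"
    using l by (intro sum.cong) (auto simp: Ef_im)
  also have "\<dots> = - \<i> * M m l" using l by simp
  finally have S: "(\<Sum>q<r. M m q * cnj (Ef p r (2*p + r + l) q)) = - \<i> * M m l" .
  have E: "Ef p r (2*p + r + l) m = (if m = l then \<i> else 0)" by (rule Ef_im[OF l m])
  show ?thesis unfolding EBf_def S E by (cases "m = l") (simp_all add: algebra_simps)
qed

lemma Fc_re: "l < r \<Longrightarrow> a < r \<Longrightarrow> Fc p r M (2*p + l) a = Pm r M a l + Qm r M a l"
proof -
  assume l: "l < r" and a: "a < r"
  show ?thesis by (simp only: Fc_def EB_re[OF l]) (auto simp: Pm_def Qm_def algebra_simps)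
qed

lemma Fc_im: "l < r \<Longrightarrow> a < r \<Longrightarrow> r \<ge> 1 \<Longrightarrow> Fc p r M (2*p + r + l) a = \<i> * (Pm r M a l - Qm r M a l)"
proof -
  assume l: "l < r" and a: "a < r" and r: "r \<ge> 1"
  have r1: "r - 1 < r" using r by simp
  show ?thesis by (simp only: Fc_def EB_im[OF l a] EB_im[OF l r1]) (auto simp: Pm_def Qm_def algebra_simps)
qed

lemma skew_diag: "M \<in> so_r r \<Longrightarrow> i < r \<Longrightarrow> M i i = 0"
proof -
  assume "M \<in> so_r r" "i < r"
  then have "M i i = - M i i" unfolding so_r_def by blast
  then show ?thesis by (simp add: complex_eq_iff)
qed

lemma Pm_mult: "Pm r M k l * x = (if l = k then x else 0) + M k (r - 1) * (if l = r - 1 then x else 0)"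
proof -
  have "Pm r M k l * x = (if l = k then 1 else 0) * x + (M k (r - 1) * (if l = r - 1 then 1 else 0)) * x"
    unfolding Pm_def by (rule distrib_right)
  moreover have "(if l = k then 1 else 0) * x = (if l = k then x else (0::complex))" by simp
  moreover have "(M k (r - 1) * (if l = r - 1 then 1 else 0)) * x = M k (r - 1) * (if l = r - 1 then x else 0)"
    by simp
  ultimately show ?thesis by simp
qed

lemma PQ_sum:
  assumes M: "M \<in> so_r r" and r: "r \<ge> 2" and k: "k < r - 1" and k': "k' < r"
  shows "(\<Sum>l<r. Pm r M k l * Qm r M k' l) = M k' k"
proof -
  have "(\<Sum>l<r. Pm r M k l * Qm r M k' l)
      = (\<Sum>l<r. (if l = k then Qm r M k' l else 0) + M k (r - 1) * (if l = r - 1 then Qm r M k' l else 0))"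
    by (simp only: Pm_mult)
  also have "\<dots> = (\<Sum>l<r. (if l = k then Qm r M k' l else 0)) + M k (r - 1) * (\<Sum>l<r. (if l = r - 1 then Qm r M k' l else 0))"
    by (simp only: sum.distrib sum_distrib_left)
  also have "\<dots> = Qm r M k' k + M k (r - 1) * Qm r M k' (r - 1)" using k r by simp
  also have "\<dots> = M k' k"
  proof -
    have sk: "\<forall>i<r. \<forall>j<r. M j i = - M i j" using M unfolding so_r_def by blast
    have "k < r" "r - 1 < r" using k r by auto
    then have "M (r - 1) k = - M k (r - 1)" using sk by blast
    moreover have "M (r - 1) (r - 1) = 0" using skew_diag[OF M, of "r - 1"] r by simp
    ultimately show ?thesis unfolding Qm_def by (simp add: algebra_simps)
  qed
  finally show ?thesis .
qed

lemma high_sum: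
  assumes M: "M \<in> so_r r" and r: "r \<ge> 2" and k: "k < r - 1" and k': "k' < r - 1"
  shows "(\<Sum>l<r. Fc p r M (2*p + l) k * Fc p r M (2*p + l) k')
       + (\<Sum>l<r - 1. Fc p r M (2*p + r + l) k * Fc p r M (2*p + r + l) k') = 0"
proof -
  have r1: "r - 1 < r" "r \<ge> 1" using r by auto
  have kr: "k < r" "k' < r" using k k' by auto
  have d: "M (r - 1) (r - 1) = 0" using skew_diag[OF M r1(1)] .
  have last: "Fc p r M (2*p + r + (r - 1)) k = 0"
    using Fc_im[OF r1(1) kr(1) r1(2), of p M] k d by (simp add: Pm_def Qm_def)
  have ext: "(\<Sum>l<r - 1. Fc p r M (2*p + r + l) k * Fc p r M (2*p + r + l) k')
        = (\<Sum>l<r. Fc p r M (2*p + r + l) k * Fc p r M (2*p + r + l) k')"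
  proof -
    have "r = Suc (r - 1)" using r by simp
    then have "(\<Sum>l<r. Fc p r M (2*p + r + l) k * Fc p r M (2*p + r + l) k')
       = (\<Sum>l<Suc (r - 1). Fc p r M (2*p + r + l) k * Fc p r M (2*p + r + l) k')" by simp
    also have "\<dots> = (\<Sum>l<r - 1. Fc p r M (2*p + r + l) k * Fc p r M (2*p + r + l) k')"
      by (simp only: sum.lessThan_Suc last) simp
    finally show ?thesis by simp
  qed
  have trm: "Fc p r M (2*p + l) k * Fc p r M (2*p + l) k' + Fc p r M (2*p + r + l) k * Fc p r M (2*p + r + l) k'
     = 2 * (Pm r M k l * Qm r M k' l) + 2 * (Pm r M k' l * Qm r M k l)" if l: "l < r" for l
  proof -
    have "Fc p r M (2*p + l) k * Fc p r M (2*p + l) k' + Fc p r M (2*p + r + l) k * Fc p r M (2*p + r + l) k'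
       = (Pm r M k l + Qm r M k l) * (Pm r M k' l + Qm r M k' l)
         + (\<i> * \<i>) * ((Pm r M k l - Qm r M k l) * (Pm r M k' l - Qm r M k' l))"
      using Fc_re[OF l kr(1)] Fc_re[OF l kr(2)] Fc_im[OF l kr(1) r1(2)] Fc_im[OF l kr(2) r1(2)]
      by (simp only: ac_simps)
    also have "\<dots> = 2 * (Pm r M k l * Qm r M k' l) + 2 * (Pm r M k' l * Qm r M k l)"
      by (simp add: algebra_simps)
    finally show ?thesis .
  qed
  have "(\<Sum>l<r. Fc p r M (2*p + l) k * Fc p r M (2*p + l) k')
       + (\<Sum>l<r. Fc p r M (2*p + r + l) k * Fc p r M (2*p + r + l) k')
      = (\<Sum>l<r. 2 * (Pm r M k l * Qm r M k' l) + 2 * (Pm r M k' l * Qm r M k l))"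
    by (simp only: sum.distrib[symmetric]) (rule sum.cong, simp_all add: trm)
  also have "\<dots> = 2 * (\<Sum>l<r. Pm r M k l * Qm r M k' l) + 2 * (\<Sum>l<r. Pm r M k' l * Qm r M k l)"
    by (simp only: sum.distrib sum_distrib_left)
  also have "\<dots> = 2 * M k' k + 2 * M k k'"
    using PQ_sum[OF M r k kr(2)] PQ_sum[OF M r k' kr(1)] by simp
  also have "\<dots> = 0"
  proof -
    have "M k' k = - M k k'" using M kr unfolding so_r_def by blast
    then show ?thesis by simp
  qed
  finally show ?thesis using ext by simp
qed

lemma sum_lessThan_add: "(\<Sum>i<m + (n::nat). h i) = (\<Sum>i<m. h i) + (\<Sum>i<n. h (m + i))"
  by (induct n) (simp_all add: add.assoc)

lemma main_X:
  assumes X: "X \<in> Upn p n" and n: "n = p + 2 * r - 1" and r: "r \<ge> 2" and M: "M \<in> so_r r"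
    and k: "k < r - 1" and j: "j < p" and k': "k' < r - 1" and j': "j' < p"
  shows "tau p n (\<lambda>Y. Phi_hat p r M Y k j) X = 0"
    "kappa p n (\<lambda>Y. Phi_hat p r M Y k j) (\<lambda>Y. Phi_hat p r M Y k' j') X = 0"
    "\<forall>i<p+n. \<forall>b<p. (\<lambda>t. Phi_hat p r M (coord_shift X i b t) k j) differentiable (at 0) \<and>
        (\<lambda>t. pdiff (\<lambda>Y. Phi_hat p r M Y k j) i b (coord_shift X i b t)) differentiable (at 0)"
proof -
  define Ai where "Ai = inv_p p (Af p X)"
  have "p \<le> n" using n r by simp
  then obtain B where "isinv p (Af p X) B" using Upn_inv[OF X] by blast
  then have inv: "isinv p (Af p X) Ai" unfolding Ai_def by (rule inv_p_isinv)
  define \<phi> where "\<phi> = (\<lambda>Y. Phi_hat p r M Y k j)"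
  define \<psi> where "\<psi> = (\<lambda>Y. Phi_hat p r M Y k' j')"
  have AY0: "\<And>t u v. u < p \<Longrightarrow> v < p \<Longrightarrow> Af p (coord_shift X a b t) u v = Af p X u v + (if u = a \<and> v = b then 1 * t else 0)"
    if "a < p" for a b using AY_X0[OF that] by blast
  have AY1: "\<And>t u v. u < p \<Longrightarrow> v < p \<Longrightarrow> Af p (coord_shift X (p + a) b t) u v = Af p X u v + (if u = a \<and> v = b then (-1) * t else 0)"
    for a b using AY_X1 by blast
  have s1: "(1::real) = 1 \<or> (1::real) = -1" by simp
  have s2: "(-1::real) = 1 \<or> (-1::real) = -1" by simp
  note A0 = coord_A[OF inv _ _ _ _ _ AY0 s1] and A1 = coord_A[OF inv _ _ _ _ _ AY1 s2]
  have lp: "a < 2 * p" "p + a < 2 * p" if "a < p" for a using that by auto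
  have hi: "2 * p \<le> p + (p + l)" for l by simp
  have pn: "p + n = p + (p + (r + (r - 1)))" using n r by simp
  show "\<forall>i<p+n. \<forall>b<p. (\<lambda>t. Phi_hat p r M (coord_shift X i b t) k j) differentiable (at 0) \<and>
        (\<lambda>t. pdiff (\<lambda>Y. Phi_hat p r M Y k j) i b (coord_shift X i b t)) differentiable (at 0)"
  proof (intro allI impI)
    fix i b assume i: "i < p + n" and b: "b < p"
    consider "i < p" | "p \<le> i" "i < 2 * p" | "2 * p \<le> i" by linarith
    then show "(\<lambda>t. Phi_hat p r M (coord_shift X i b t) k j) differentiable (at 0) \<and>
        (\<lambda>t. pdiff (\<lambda>Y. Phi_hat p r M Y k j) i b (coord_shift X i b t)) differentiable (at 0)"
    proof cases
      case 1
      then show ?thesis using A0[OF 1 b k j lp(1)[OF 1]] by blast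
    next
      case 2
      define a where "a = i - p"
      have a: "a < p" "i = p + a" using 2 unfolding a_def by auto
      show ?thesis using A1[OF a(1) b k j lp(2)[OF a(1)]] a(2) by blast
    next
      case 3
      then show ?thesis using coord_high[OF 3 b k j] by blast
    qed
  qed
  define h2 where "h2 i = (\<Sum>b<p. of_real (msign p i) * pdiff (pdiff \<phi> i b) i b X)" for i
  have "tau p n \<phi> X = (\<Sum>i<p + n. h2 i)" unfolding tau_def h2_def by simp
  also have "\<dots> = (\<Sum>a<p. h2 a) + (\<Sum>a<p. h2 (p + a)) + (\<Sum>l<r. h2 (p + (p + l))) + (\<Sum>l<r - 1. h2 (p + (p + (r + l))))"
    unfolding pn sum_lessThan_add by (simp add: add.assoc)
  also have "(\<Sum>a<p. h2 a) + (\<Sum>a<p. h2 (p + a)) = 0"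
  proof -
    have "h2 a + h2 (p + a) = 0" if a: "a < p" for a
    proof -
      have "h2 a + h2 (p + a) = (\<Sum>b<p. of_real (msign p a) * pdiff (pdiff \<phi> a b) a b X
              + of_real (msign p (p + a)) * pdiff (pdiff \<phi> (p + a) b) (p + a) b X)"
        unfolding h2_def by (simp add: sum.distrib)
      also have "\<dots> = 0"
        by (rule sum.neutral) (use a A0[OF a _ k j lp(1)[OF a]] A1[OF a _ k j lp(2)[OF a]] in
            \<open>auto simp: msign_def \<phi>_def\<close>)
      finally show ?thesis .
    qed
    then have "(\<Sum>a<p. h2 a + h2 (p + a)) = 0" by simp
    then show ?thesis by (simp add: sum.distrib)
  qed
  also have "(\<Sum>l<r. h2 (p + (p + l))) = 0"
    by (rule sum.neutral) (auto simp: h2_def \<phi>_def coord_high[OF hi _ k j])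
  also have "(\<Sum>l<r - 1. h2 (p + (p + (r + l)))) = 0"
    by (rule sum.neutral) (auto simp: h2_def \<phi>_def coord_high[OF hi _ k j])
  finally show "tau p n (\<lambda>Y. Phi_hat p r M Y k j) X = 0" unfolding \<phi>_def by simp
  define h where "h i = (\<Sum>b<p. of_real (msign p i) * pdiff \<phi> i b X * pdiff \<psi> i b X)" for i
  define S where "S = (\<Sum>b<p. of_real (Ai b j) * of_real (Ai b j') :: complex)"
  have hl: "h (p + (p + l)) = Fc p r M (p + (p + l)) k * Fc p r M (p + (p + l)) k' * S" for l
    unfolding h_def S_def sum_distrib_left
    by (intro sum.cong refl) (auto simp: \<phi>_def \<psi>_def coord_high[OF hi _ k j] coord_high[OF hi _ k' j']
        msign_def Ai_def mult_ac)
  have e1: "p + (p + l) = 2 * p + l" for l by simp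
  have e2: "p + (p + (r + l)) = 2 * p + r + l" for l by simp
  have "kappa p n \<phi> \<psi> X = (\<Sum>i<p + n. h i)" unfolding kappa_def h_def by simp
  also have "\<dots> = (\<Sum>a<p. h a) + (\<Sum>a<p. h (p + a)) + (\<Sum>l<r. h (p + (p + l))) + (\<Sum>l<r - 1. h (p + (p + (r + l))))"
    unfolding pn sum_lessThan_add by (simp add: add.assoc)
  also have "(\<Sum>a<p. h a) + (\<Sum>a<p. h (p + a)) = 0"
  proof -
    have "h a + h (p + a) = 0" if a: "a < p" for a
    proof -
      have "h a + h (p + a) = (\<Sum>b<p. of_real (msign p a) * pdiff \<phi> a b X * pdiff \<psi> a b X
              + of_real (msign p (p + a)) * pdiff \<phi> (p + a) b X * pdiff \<psi> (p + a) b X)"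
        unfolding h_def by (simp add: sum.distrib)
      also have "\<dots> = 0"
        by (rule sum.neutral) (use a A0[OF a _ k j lp(1)[OF a]] A1[OF a _ k j lp(2)[OF a]]
            A0[OF a _ k' j' lp(1)[OF a]] A1[OF a _ k' j' lp(2)[OF a]] in
            \<open>auto simp: msign_def \<phi>_def \<psi>_def\<close>)
      finally show ?thesis .
    qed
    then have "(\<Sum>a<p. h a + h (p + a)) = 0" by simp
    then show ?thesis by (simp add: sum.distrib)
  qed
  also have "(\<Sum>l<r. h (p + (p + l))) = (\<Sum>l<r. Fc p r M (2*p + l) k * Fc p r M (2*p + l) k') * S"
    by (simp only: sum_distrib_right hl, simp only: e1)
  also have "(\<Sum>l<r - 1. h (p + (p + (r + l)))) = (\<Sum>l<r - 1. Fc p r M (2*p + r + l) k * Fc p r M (2*p + r + l) k') * S"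
    by (simp only: sum_distrib_right hl, simp only: e2)
  finally show "kappa p n (\<lambda>Y. Phi_hat p r M Y k j) (\<lambda>Y. Phi_hat p r M Y k' j') X = 0"
    using high_sum[OF M r k k', of p] unfolding \<phi>_def \<psi>_def
    by (simp add: distrib_right[symmetric])
qed

lemma mm_assoc:
  fixes A B C :: "nat \<Rightarrow> nat \<Rightarrow> 'a::comm_semiring_0"
  shows "(\<Sum>k<p. (\<Sum>l<p. A i l * B l k) * C k j) = (\<Sum>l<p. A i l * (\<Sum>k<p. B l k * C k j))"
proof -
  have "(\<Sum>k<p. (\<Sum>l<p. A i l * B l k) * C k j) = (\<Sum>k<p. \<Sum>l<p. A i l * B l k * C k j)"
    by (simp add: sum_distrib_right)
  also have "\<dots> = (\<Sum>l<p. \<Sum>k<p. A i l * B l k * C k j)" by (rule sum.swap)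
  also have "\<dots> = (\<Sum>l<p. A i l * (\<Sum>k<p. B l k * C k j))"
    by (simp add: sum_distrib_left mult.assoc)
  finally show ?thesis .
qed

lemma mm_id:
  fixes C :: "nat \<Rightarrow> nat \<Rightarrow> 'a::comm_semiring_1"
  assumes "\<And>k. k < p \<Longrightarrow> B l k = (if l = k then 1 else 0)" "l < p"
  shows "(\<Sum>k<p. B l k * C k j) = C l j"
proof -
  have "(\<Sum>k<p. B l k * C k j) = (\<Sum>k<p. if l = k then C k j else 0)"
    using assms(1) by (intro sum.cong) auto
  also have "\<dots> = C l j" using assms(2) by simp
  finally show ?thesis .
qed

lemma isinv_prod:
  assumes A: "isinv p A Ai" and g: "isinv p g h"
  shows "isinv p (\<lambda>u v. \<Sum>m<p. A u m * g m v) (\<lambda>u v. \<Sum>m<p. h u m * Ai m v)"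
  unfolding isinv_def
proof (intro allI impI conjI)
  fix i j assume ij: "i < p" "j < p"
  have "(\<Sum>k<p. (\<Sum>m<p. A i m * g m k) * (\<Sum>m<p. h k m * Ai m j))
      = (\<Sum>l<p. A i l * (\<Sum>k<p. g l k * (\<Sum>m<p. h k m * Ai m j)))" by (rule mm_assoc)
  also have "\<dots> = (\<Sum>l<p. A i l * (\<Sum>m<p. (\<Sum>k<p. g l k * h k m) * Ai m j))"
    by (simp only: mm_assoc)
  also have "\<dots> = (\<Sum>l<p. A i l * Ai l j)"
    by (intro sum.cong refl, subst mm_id) (use g in \<open>auto simp: isinv_def\<close>)
  also have "\<dots> = (if i = j then 1 else 0)" using A ij by (simp add: isinv_def)
  finally show "(\<Sum>k<p. (\<Sum>m<p. A i m * g m k) * (\<Sum>m<p. h k m * Ai m j)) = (if i = j then 1 else 0)" .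
next
  fix i j assume ij: "i < p" "j < p"
  have "(\<Sum>k<p. (\<Sum>m<p. h i m * Ai m k) * (\<Sum>m<p. A k m * g m j))
      = (\<Sum>l<p. h i l * (\<Sum>k<p. Ai l k * (\<Sum>m<p. A k m * g m j)))" by (rule mm_assoc)
  also have "\<dots> = (\<Sum>l<p. h i l * (\<Sum>m<p. (\<Sum>k<p. Ai l k * A k m) * g m j))"
    by (simp only: mm_assoc)
  also have "\<dots> = (\<Sum>l<p. h i l * g l j)"
    by (intro sum.cong refl, subst mm_id) (use A in \<open>auto simp: isinv_def\<close>)
  also have "\<dots> = (if i = j then 1 else 0)" using g ij by (simp add: isinv_def)
  finally show "(\<Sum>k<p. (\<Sum>m<p. h i m * Ai m k) * (\<Sum>m<p. A k m * g m j)) = (if i = j then 1 else 0)" .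
qed

lemma Wf_rmul: "q < p \<Longrightarrow> Wf p r (rmul p X g) l q = (\<Sum>m<p. Wf p r X l m * of_real (g m q))"
  by (simp add: Wf_def rmul_def complex_eq_iff)

lemma Bf_rmul: "q < p \<Longrightarrow> Bf p r M (rmul p X g) l q = (\<Sum>m<p. Bf p r M X l m * of_real (g m q))"
proof -
  assume q: "q < p"
  have "(\<Sum>q'<r. M l q' * cnj (Wf p r (rmul p X g) q' q))
      = (\<Sum>q'<r. \<Sum>m<p. M l q' * cnj (Wf p r X q' m) * of_real (g m q))"
    using q by (simp add: Wf_rmul sum_distrib_left mult.assoc)
  also have "\<dots> = (\<Sum>m<p. \<Sum>q'<r. M l q' * cnj (Wf p r X q' m) * of_real (g m q))" by (rule sum.swap)
  also have "\<dots> = (\<Sum>m<p. (\<Sum>q'<r. M l q' * cnj (Wf p r X q' m)) * of_real (g m q))"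
    by (simp add: sum_distrib_right)
  finally show ?thesis using q by (simp add: Bf_def Wf_rmul distrib_right sum.distrib)
qed

lemma Cf_rmul: "q < p \<Longrightarrow> Cf p r M (rmul p X g) a q = (\<Sum>m<p. Cf p r M X a m * of_real (g m q))"
  by (simp add: Cf_def Bf_rmul distrib_right sum.distrib sum_distrib_left mult.assoc)

lemma Af_rmul: "v < p \<Longrightarrow> Af p (rmul p X g) u v = (\<Sum>m<p. Af p X u m * g m v)"
  by (simp add: Af_def rmul_def sum_subtractf algebra_simps)

lemma GL_inv_X:
  assumes X: "isinv p (Af p X) Ai" and g: "isinv p g h"
  shows "Phi_hat p r M (rmul p X g) k j = Phi_hat p r M X k j"
proof (cases "k < r - 1 \<and> j < p")
  case True
  then have j: "j < p" by simp
  have inv2: "isinv p (Af p (rmul p X g)) (\<lambda>u v. \<Sum>m<p. h u m * Ai m v)"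
    by (rule isinv_cong[OF isinv_prod[OF X g]]) (simp_all add: Af_rmul)
  have i1: "inv_p p (Af p (rmul p X g)) q j = (\<Sum>m<p. h q m * Ai m j)" if "q < p" for q
    using inv_p_eq[OF inv2 that j] by simp
  have i0: "inv_p p (Af p X) q j = Ai q j" if "q < p" for q using inv_p_eq[OF X that j] .
  have "(\<Sum>q<p. Cf p r M (rmul p X g) k q * of_real (inv_p p (Af p (rmul p X g)) q j))
      = (\<Sum>q<p. (\<Sum>m<p. Cf p r M X k m * of_real (g m q)) * (\<Sum>n<p. of_real (h q n) * of_real (Ai n j)))"
    by (intro sum.cong refl) (simp add: Cf_rmul i1)
  also have "\<dots> = (\<Sum>m<p. Cf p r M X k m * (\<Sum>q<p. of_real (g m q) * (\<Sum>n<p. of_real (h q n) * of_real (Ai n j))))"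
    by (rule mm_assoc)
  also have "\<dots> = (\<Sum>m<p. Cf p r M X k m * (\<Sum>n<p. (\<Sum>q<p. of_real (g m q) * of_real (h q n)) * of_real (Ai n j)))"
  proof (intro sum.cong refl)
    fix m
    show "Cf p r M X k m * (\<Sum>q<p. of_real (g m q) * (\<Sum>n<p. of_real (h q n) * of_real (Ai n j)))
        = Cf p r M X k m * (\<Sum>n<p. (\<Sum>q<p. of_real (g m q) * of_real (h q n)) * of_real (Ai n j))"
      using mm_assoc[where A="\<lambda>i q. complex_of_real (g i q)" and B="\<lambda>q n. complex_of_real (h q n)"
          and C="\<lambda>n j. complex_of_real (Ai n j)" and i=m and j=j and p=p] by simp
  qed
  also have "\<dots> = (\<Sum>m<p. Cf p r M X k m * of_real (Ai m j))"
  proof (intro sum.cong refl)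
    fix m assume m: "m \<in> {..<p}"
    have "(\<Sum>n<p. (\<Sum>q<p. complex_of_real (g m q) * of_real (h q n)) * of_real (Ai n j))
        = (\<Sum>n<p. (of_real (\<Sum>q<p. g m q * h q n)) * of_real (Ai n j))" by simp
    also have "\<dots> = of_real (Ai m j)"
      by (subst mm_id[where B="\<lambda>m n. of_real (\<Sum>q<p. g m q * h q n)"]) (use g m in \<open>auto simp: isinv_def\<close>)
    finally show "Cf p r M X k m * (\<Sum>n<p. (\<Sum>q<p. of_real (g m q) * of_real (h q n)) * of_real (Ai n j))
        = Cf p r M X k m * of_real (Ai m j)" by simp
  qed
  finally show ?thesis using True by (simp add: Phi_hat_alt i0)
next
  case False
  show ?thesis by (simp only: Phi_hat_alt if_not_P[OF False])
qed

lemma Cf_lastrow: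
  assumes XY: "\<And>i j. i \<noteq> 2*p + 2*r - 1 \<Longrightarrow> X i j = Y i j" and r: "r \<ge> 2"
    and M: "M \<in> so_r r" and a: "a < r - 1"
  shows "Cf p r M Y a q = Cf p r M X a q"
proof -
  define R where "R = 2*p + 2*r - 1"
  define d where "d = complex_of_real (Y R q - X R q)"
  have W: "Wf p r Y l q = Wf p r X l q + (if l = r - 1 then \<i> * d else 0)" if l: "l < r" for l
  proof -
    have "2*p + l \<noteq> R" using l r unfolding R_def by simp
    then have 1: "Y (2*p + l) q = X (2*p + l) q" using XY unfolding R_def by metis
    show ?thesis
    proof (cases "l = r - 1")
      case True
      then have "2*p + r + l = R" using r unfolding R_def by simp
      then show ?thesis using 1 True unfolding Wf_def d_def by (simp add: complex_eq_iff)
    next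
      case False
      then have "2*p + r + l \<noteq> R" using l r unfolding R_def by simp
      then have "Y (2*p + r + l) q = X (2*p + r + l) q" using XY unfolding R_def by metis
      then show ?thesis using 1 False unfolding Wf_def by simp
    qed
  qed
  have dr: "cnj d = d" unfolding d_def by simp
  have B: "Bf p r M Y l q = Bf p r M X l q + (if l = r - 1 then \<i> * d else 0) - \<i> * d * M l (r - 1)"
    if l: "l < r" for l
  proof -
    have "(\<Sum>q'<r. M l q' * cnj (Wf p r Y q' q))
        = (\<Sum>q'<r. M l q' * cnj (Wf p r X q' q) + (if q' = r - 1 then M l q' * cnj (\<i> * d) else 0))"
      by (intro sum.cong refl) (simp add: W right_diff_distrib distrib_left)
    also have "\<dots> = (\<Sum>q'<r. M l q' * cnj (Wf p r X q' q)) + M l (r - 1) * cnj (\<i> * d)"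
      using r by (simp add: sum.distrib)
    finally show ?thesis unfolding Bf_def using W[OF l] dr by (simp add: algebra_simps)
  qed
  have ar: "a < r" "r - 1 < r" using a r by auto
  have "M (r - 1) (r - 1) = 0" using skew_diag[OF M ar(2)] .
  then show ?thesis unfolding Cf_def B[OF ar(1)] B[OF ar(2)] using a by (simp add: algebra_simps)
qed

lemma clause1:
  assumes XY: "\<And>i j. i \<noteq> 2*p + 2*r - 1 \<Longrightarrow> X i j = Y i j" and r: "r \<ge> 2" and M: "M \<in> so_r r"
  shows "Phi_hat p r M X = Phi_hat p r M Y"
proof (intro ext)
  fix k j
  have A: "inv_p p (Af p X) = inv_p p (Af p Y)"
  proof (rule inv_p_cong)
    fix i j assume i: "i < p"
    then have "i \<noteq> 2*p + 2*r - 1" "p + i \<noteq> 2*p + 2*r - 1" using r by auto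
    then show "Af p X i j = Af p Y i j" unfolding Af_def using XY by metis
  qed
  show "Phi_hat p r M X k j = Phi_hat p r M Y k j"
    unfolding Phi_hat_alt A using Cf_lastrow[OF XY r M] by simp
qed

lemma Upn_mono: "Upn p (s - 1) \<subseteq> Upn p s"
proof (cases "s = 0")
  case True then show ?thesis by simp
next
  case False
  show ?thesis
  proof
    fix X assume X: "X \<in> Upn p (s - 1)"
    have z: "X i j = 0" if "p + (s - 1) \<le> i \<or> p \<le> j" for i j using X that unfolding Upn_def by blast
    have "(\<Sum>i\<in>{p..<p+s}. (\<Sum>j<p. X i j * v j)\<^sup>2) = (\<Sum>i\<in>{p..<p+(s-1)}. (\<Sum>j<p. X i j * v j)\<^sup>2)" for v :: "nat \<Rightarrow> real"
    proof -
      have "p + s = Suc (p + (s - 1))" using False by simp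
      then have "(\<Sum>i\<in>{p..<p+s}. (\<Sum>j<p. X i j * v j)\<^sup>2) = (\<Sum>i\<in>{p..<p+(s-1)}. (\<Sum>j<p. X i j * v j)\<^sup>2)
          + (\<Sum>j<p. X (p + (s - 1)) j * v j)\<^sup>2"
        by (simp only: sum.atLeastLessThan_Suc[of p "p + (s - 1)"])
      moreover have "(\<Sum>j<p. X (p + (s - 1)) j * v j) = 0" using z by simp
      ultimately show ?thesis by simp
    qed
    moreover have "\<forall>i j. (p + s \<le> i \<or> p \<le> j) \<longrightarrow> X i j = 0"
    proof (intro allI impI)
      fix i j assume "p + s \<le> i \<or> p \<le> j"
      then have "p + (s - 1) \<le> i \<or> p \<le> j" by auto
      then show "X i j = 0" by (rule z)
    qed
    ultimately show "X \<in> Upn p s" using X unfolding Upn_def by auto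
  qed
qed

theorem proposition5p3:
  fixes p r s :: nat and M :: cmat
  assumes "p \<ge> 1" and "r \<ge> 2" and "s = p + 2 * r" and "M \<in> so_r r"
  shows "(\<forall>X\<in>Upn p s. \<forall>Y\<in>Upn p s. (\<forall>i j. i \<noteq> p + s - 1 \<longrightarrow> X i j = Y i j)
            \<longrightarrow> Phi_hat p r M X = Phi_hat p r M Y)
       \<and> Upn p (s - 1) \<subseteq> Upn p s
       \<and> (let \<Omega> = {(\<lambda>Y. Phi_hat p r M Y k j) | k j. k < r - 1 \<and> j < p} in
            orthogonal_harmonic_family p (s - 1) (Upn p (s - 1)) \<Omega>
          \<and> (\<forall>\<phi>\<in>\<Omega>. twice_pdiff p (s - 1) (Upn p (s - 1)) \<phi>
                    \<and> GL_invariant p (Upn p (s - 1)) \<phi>))"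
proof -
  note r = assms(2) and M = assms(4)
  have n: "s - 1 = p + 2 * r - 1" using assms by simp
  have R: "p + s - 1 = 2 * p + 2 * r - 1" using assms by simp
  have c1: "\<forall>X\<in>Upn p s. \<forall>Y\<in>Upn p s. (\<forall>i j. i \<noteq> p + s - 1 \<longrightarrow> X i j = Y i j)
            \<longrightarrow> Phi_hat p r M X = Phi_hat p r M Y"
  proof (intro ballI impI)
    fix X Y :: rmat assume "\<forall>i j. i \<noteq> p + s - 1 \<longrightarrow> X i j = Y i j"
    then have "\<And>i j. i \<noteq> 2 * p + 2 * r - 1 \<Longrightarrow> X i j = Y i j" unfolding R by blast
    then show "Phi_hat p r M X = Phi_hat p r M Y" by (rule clause1[OF _ r M])
  qed
  define \<Omega> where "\<Omega> = {(\<lambda>Y. Phi_hat p r M Y k j) | k j. k < r - 1 \<and> j < p}"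
  define U where "U = Upn p (s - 1)"
  have tau0: "\<forall>\<phi>\<in>\<Omega>. \<forall>X\<in>U. tau p (s - 1) \<phi> X = 0"
  proof (intro ballI)
    fix \<phi> X assume "\<phi> \<in> \<Omega>" and X: "X \<in> U"
    then obtain k j where \<phi>: "\<phi> = (\<lambda>Y. Phi_hat p r M Y k j)" "k < r - 1" "j < p"
      unfolding \<Omega>_def by blast
    show "tau p (s - 1) \<phi> X = 0"
      unfolding \<phi>(1) by (rule main_X(1)[OF X[unfolded U_def] n r M \<phi>(2,3) \<phi>(2,3)])
  qed
  have kappa0: "\<forall>\<phi>\<in>\<Omega>. \<forall>\<psi>\<in>\<Omega>. \<forall>X\<in>U. kappa p (s - 1) \<phi> \<psi> X = 0"
  proof (intro ballI)
    fix \<phi> \<psi> X assume "\<phi> \<in> \<Omega>" "\<psi> \<in> \<Omega>" and X: "X \<in> U"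
    then obtain k j k' j' where \<phi>: "\<phi> = (\<lambda>Y. Phi_hat p r M Y k j)" "k < r - 1" "j < p"
      and \<psi>: "\<psi> = (\<lambda>Y. Phi_hat p r M Y k' j')" "k' < r - 1" "j' < p"
      unfolding \<Omega>_def by blast
    show "kappa p (s - 1) \<phi> \<psi> X = 0"
      unfolding \<phi>(1) \<psi>(1) by (rule main_X(2)[OF X[unfolded U_def] n r M \<phi>(2,3) \<psi>(2,3)])
  qed
  have tw: "\<forall>\<phi>\<in>\<Omega>. twice_pdiff p (s - 1) U \<phi> \<and> GL_invariant p U \<phi>"
  proof (intro ballI conjI)
    fix \<phi> assume "\<phi> \<in> \<Omega>"
    then obtain k j where \<phi>: "\<phi> = (\<lambda>Y. Phi_hat p r M Y k j)" "k < r - 1" "j < p"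
      unfolding \<Omega>_def by blast
    show "twice_pdiff p (s - 1) U \<phi>"
      unfolding twice_pdiff_def
    proof (intro ballI)
      fix X assume X: "X \<in> U"
      show "\<forall>i<p + (s - 1). \<forall>j<p. (\<lambda>t. \<phi> (coord_shift X i j t)) differentiable at 0 \<and>
             (\<lambda>t. pdiff \<phi> i j (coord_shift X i j t)) differentiable at 0"
        using main_X(3)[OF X[unfolded U_def] n r M \<phi>(2,3) \<phi>(2,3)] unfolding \<phi>(1) by simp
    qed
    show "GL_invariant p U \<phi>"
      unfolding GL_invariant_def
    proof (intro ballI allI impI)
      fix X g assume X: "X \<in> U" and g: "invertible_p p g"
      obtain h where h: "isinv p g h" using g unfolding invertible_p_def isinv_def by blast
      have "p \<le> s - 1" using assms by simp
      then obtain B where "isinv p (Af p X) B" using Upn_inv[OF X[unfolded U_def]] by blast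
      then have inv: "isinv p (Af p X) (inv_p p (Af p X))" by (rule inv_p_isinv)
      show "\<phi> (rmul p X g) = \<phi> X" unfolding \<phi>(1) by (rule GL_inv_X[OF inv h])
    qed
  qed
  show ?thesis
    using c1 Upn_mono[of p s] tau0 kappa0 tw
    unfolding Let_def orthogonal_harmonic_family_def \<Omega>_def U_def by blast
qed

end
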